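(* Let $\mathcal{P}$ be a (weakly connected) collection of cells whose connected components are $\mathcal{P}_1,\dots,\mathcal{P}_n$. For each $i$ let $\tilde{r}_{\mathcal{P}_i}(t)$ be the switching rook polynomial of $\mathcal{P}_i$. Then $\prod_{i=1}^n \tilde{r}_{\mathcal{P}_i}(t)$ is the switching rook polynomial of $\mathcal{P}$.
   Context: For $a=(a_1,a_2)\le b=(b_1,b_2)$ in $\mathbb{Z}^2$ (componentwise order), the interval $[a,b]$ is $\{(m,n)\in\mathbb{Z}^2: a_1\le m\le b_1,\ a_2\le n\le b_2\}$; it is proper if $a_1<b_1$ and $a_2<b_2$. A cell is a proper interval $[a,a+(1,1)]$, with lower left corner $a$; its vertices are its four points. A collection of cells is a finite non-empty set $\mathcal{P}$ of cells; it is weakly connected if any two of its cells are joined by a sequence of cells of $\mathcal{P}$ in which consecutive cells share a vertex (throughout, "collection of cells" means a weakly connected one). A path in $\mathcal{P}$ is a sequence of distinct cells of $\mathcal{P}$, consecutive ones sharing an edge; a polyomino is a collection of cells in which any two cells are joined by a path; a connected component of $\mathcal{P}$ is a subset which is a polyomino and is maximal with this property. An inner interval of $\mathcal{P}$ is a proper interval all of whose cells belong to $\mathcal{P}$. A cell interval of $\mathcal{P}$ is a set of cells of $\mathcal{P}$ whose lower left corners form the points of an interval $[(i,j),(k,l)]$ with $i=k$ or $j=l$ (vertical or horizontal). Two rooks placed in cells of $\mathcal{P}$ are non-attacking if they do not lie in a common horizontal or vertical cell interval contained in $\mathcal{P}$; a $k$-rook configuration is a set of $k$ pairwise non-attacking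 rooks in cells of $\mathcal{P}$, and $r(\mathcal{P})$ is the maximum such $k$. Two non-attacking rooks are switching if they occupy cells $A,B$ with lower left corners $(i,j),(k,l)$, $i\ne k$, $j\neq l$, such that all cells of the inner interval spanned by $A$ and $B$ lie in $\mathcal{P}$ (i.e. $A,B$ are diagonal or anti-diagonal cells of a rectangle of $\mathcal{P}$); a switch replaces them by rooks in the cells with lower left corners $(i,l)$ and $(k,j)$. Two $k$-rook configurations are equivalent if one is obtained from the other by a finite sequence of switches. If $\tilde r_k$ is the number of equivalence classes of $k$-rook configurations ($\tilde r_0=1$), the switching rook polynomial of $\mathcal{P}$ is $\tilde r_{\mathcal{P}}(t)=\sum_{k=0}^{r(\mathcal{P})}\tilde r_k t^k$. *)

theory Defs
  imports "HOL-Computational_Algebra.Polynomial"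
begin

text \<open>A cell is identified with its lower left corner in int x int.
  A set of cells is thus an (int \<times> int) set.\<close>

type_synonym cell = "int \<times> int"

definition share_vertex :: "cell \<Rightarrow> cell \<Rightarrow> bool" where
  "share_vertex A B \<longleftrightarrow> \<bar>fst A - fst B\<bar> \<le> 1 \<and> \<bar>snd A - snd B\<bar> \<le> 1"

definition share_edge :: "cell \<Rightarrow> cell \<Rightarrow> bool" where
  "share_edge A B \<longleftrightarrow> \<bar>fst A - fst B\<bar> + \<bar>snd A - snd B\<bar> = 1"

definition weakly_connected :: "cell set \<Rightarrow> bool" where
  "weakly_connected P \<longleftrightarrow> (\<forall>A\<in>P. \<forall>B\<in>P. \<exists>xs. xs \<noteq> [] \<and> hd xs = A \<and> last xs = B \<and>
      set xs \<subseteq> P \<and> (\<forall>i. Suc i < length xs \<longrightarrow> share_vertex (xs ! i) (xs ! Suc i)))"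

definition collection :: "cell set \<Rightarrow> bool" where
  "collection P \<longleftrightarrow> finite P \<and> P \<noteq> {} \<and> weakly_connected P"

definition is_path :: "cell set \<Rightarrow> cell list \<Rightarrow> bool" where
  "is_path P xs \<longleftrightarrow> xs \<noteq> [] \<and> distinct xs \<and> set xs \<subseteq> P \<and>
      (\<forall>i. Suc i < length xs \<longrightarrow> share_edge (xs ! i) (xs ! Suc i))"

definition polyomino :: "cell set \<Rightarrow> bool" where
  "polyomino P \<longleftrightarrow> collection P \<and>
     (\<forall>A\<in>P. \<forall>B\<in>P. \<exists>xs. is_path P xs \<and> hd xs = A \<and> last xs = B)"

definition components :: "cell set \<Rightarrow> cell set set" where
  "components P = {Q. Q \<subseteq> P \<and> polyomino Q \<and>
      (\<forall>Q'. Q \<subseteq> Q' \<and> Q' \<subseteq> P \<and> polyomino Q' \<longrightarrow> Q' = Q)}"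

definition attacking :: "cell set \<Rightarrow> cell \<Rightarrow> cell \<Rightarrow> bool" where
  "attacking P A B \<longleftrightarrow>
     (snd A = snd B \<and> (\<forall>x. min (fst A) (fst B) \<le> x \<and> x \<le> max (fst A) (fst B) \<longrightarrow> (x, snd A) \<in> P)) \<or>
     (fst A = fst B \<and> (\<forall>y. min (snd A) (snd B) \<le> y \<and> y \<le> max (snd A) (snd B) \<longrightarrow> (fst A, y) \<in> P))"

definition rook_config :: "cell set \<Rightarrow> cell set \<Rightarrow> bool" where
  "rook_config P C \<longleftrightarrow> C \<subseteq> P \<and> (\<forall>A\<in>C. \<forall>B\<in>C. A \<noteq> B \<longrightarrow> \<not> attacking P A B)"

definition k_rook_configs :: "cell set \<Rightarrow> nat \<Rightarrow> cell set set" where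
  "k_rook_configs P k = {C. rook_config P C \<and> card C = k}"

definition rook_number :: "cell set \<Rightarrow> nat" where
  "rook_number P = Max {card C | C. rook_config P C}"

definition switch :: "cell set \<Rightarrow> cell set \<Rightarrow> cell set \<Rightarrow> bool" where
  "switch P C D \<longleftrightarrow> (\<exists>i j k l. (i, j) \<in> C \<and> (k, l) \<in> C \<and> i \<noteq> k \<and> j \<noteq> l \<and>
      (\<forall>x y. min i k \<le> x \<and> x \<le> max i k \<and> min j l \<le> y \<and> y \<le> max j l \<longrightarrow> (x, y) \<in> P) \<and>
      D = (C - {(i, j), (k, l)}) \<union> {(i, l), (k, j)})"

definition switch_equiv :: "cell set \<Rightarrow> nat \<Rightarrow> (cell set \<times> cell set) set" where
  "switch_equiv P k = {(C, D). C \<in> k_rook_configs P k \<and> D \<in> k_rook_configs P k \<and>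
      (switch P)\<^sup>*\<^sup>* C D}"

definition switching_rook_number :: "cell set \<Rightarrow> nat \<Rightarrow> nat" where
  "switching_rook_number P k = card (k_rook_configs P k // switch_equiv P k)"

definition switching_rook_poly :: "cell set \<Rightarrow> int poly" where
  "switching_rook_poly P =
     (\<Sum>k\<le>rook_number P. monom (int (switching_rook_number P k)) k)"

end

theory Submission
  imports Defs
begin


lemma share_edge_sym: "share_edge a b \<Longrightarrow> share_edge b a"
  by (auto simp: share_edge_def abs_minus_commute)

lemma seg:
  fixes f :: "int \<Rightarrow> cell" and lo hi z x :: int
  assumes noadj: "\<And>a b. a \<in> A \<Longrightarrow> b \<in> B \<Longrightarrow> \<not> share_edge a b"
    and adj: "\<And>x. share_edge (f x) (f (x+1))"
    and all: "\<And>x. lo \<le> x \<Longrightarrow> x \<le> hi \<Longrightarrow> f x \<in> A \<union> B"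
    and z: "lo \<le> z" "z \<le> hi" "f z \<in> A" and x: "lo \<le> x" "x \<le> hi"
  shows "f x \<in> A"
proof -
  have up: "z + int n \<le> hi \<longrightarrow> f (z + int n) \<in> A" for n
  proof (induction n)
    case 0 then show ?case using z by simp
  next
    case (Suc n)
    show ?case
    proof
      assume h: "z + int (Suc n) \<le> hi"
      then have a: "f (z + int n) \<in> A" using Suc by simp
      have "f (z + int n + 1) \<in> A \<union> B" using h z by (intro all) auto
      moreover have "f (z + int n + 1) \<notin> B" using noadj[OF a] adj[of "z + int n"] by blast
      moreover have eq: "z + int (Suc n) = z + int n + 1" by simp
      ultimately show "f (z + int (Suc n)) \<in> A" unfolding eq by blast
    qed
  qed
  have down: "lo \<le> z - int n \<longrightarrow> f (z - int n) \<in> A" for n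
  proof (induction n)
    case 0 then show ?case using z by simp
  next
    case (Suc n)
    show ?case
    proof
      assume h: "lo \<le> z - int (Suc n)"
      then have a: "f (z - int n) \<in> A" using Suc by simp
      have "f (z - int n - 1) \<in> A \<union> B" using h z by (intro all) auto
      moreover have "f (z - int n - 1) \<notin> B"
      proof -
        have e: "share_edge (f (z - int n)) (f (z - int n - 1))"
          using share_edge_sym[OF adj[of "z - int n - 1"]] by simp
        then show ?thesis using noadj[OF a] by blast
      qed
      ultimately show "f (z - int (Suc n)) \<in> A" by (simp add: algebra_simps)
    qed
  qed
  show ?thesis
  proof (cases "z \<le> x")
    case True
    define n where "n = nat (x - z)"
    have n: "x = z + int n" using True n_def by simp
    show ?thesis using up[of n] x n by simp
  next
    case False
    define n where "n = nat (z - x)"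
    have n: "x = z - int n" using False n_def by simp
    show ?thesis using down[of n] x n by simp
  qed
qed

definition sep :: "cell set \<Rightarrow> cell set \<Rightarrow> bool" where
  "sep A B \<longleftrightarrow> A \<inter> B = {} \<and> (\<forall>a\<in>A. \<forall>b\<in>B. \<not> share_edge a b)"

lemma sep_sym: "sep A B \<Longrightarrow> sep B A"
  unfolding sep_def using share_edge_sym by blast

lemma rect:
  assumes s: "sep A B"
    and r: "\<forall>x y. min i k \<le> x \<and> x \<le> max i k \<and> min j l \<le> y \<and> y \<le> max j l \<longrightarrow> (x,y) \<in> A \<union> B"
    and a: "(i,j) \<in> A"
  shows "\<forall>x y. min i k \<le> x \<and> x \<le> max i k \<and> min j l \<le> y \<and> y \<le> max j l \<longrightarrow> (x,y) \<in> A"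
proof (intro allI impI)
  fix x y assume h: "min i k \<le> x \<and> x \<le> max i k \<and> min j l \<le> y \<and> y \<le> max j l"
  have noadj: "\<And>a b. a\<in>A \<Longrightarrow> b\<in>B \<Longrightarrow> \<not> share_edge a b" using s sep_def by blast
  have col: "(i, y) \<in> A"
    using seg[where f="\<lambda>y. (i,y)" and lo="min j l" and hi="max j l" and z=j and x=y, OF noadj]
      r a h by (auto simp: share_edge_def)
  show "(x,y) \<in> A"
    using seg[where f="\<lambda>x. (x,y)" and lo="min i k" and hi="max i k" and z=i and x=x, OF noadj]
      r col h by (auto simp: share_edge_def)
qed

lemma attacking_mono: "attacking A a b \<Longrightarrow> A \<subseteq> A' \<Longrightarrow> attacking A' a b"
  unfolding attacking_def by blast

lemma attacking_sym: "attacking P a b \<Longrightarrow> attacking P b a"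
  unfolding attacking_def by (metis max.commute min.commute)

lemma att_side:
  assumes s: "sep A B" and a: "(a1,a2) \<in> A" and att: "attacking (A\<union>B) (a1,a2) (b1,b2)"
  shows "(b1,b2) \<in> A \<and> attacking A (a1,a2) (b1,b2)"
proof -
  have noadj: "\<And>a b. a\<in>A \<Longrightarrow> b\<in>B \<Longrightarrow> \<not> share_edge a b" using s sep_def by blast
  from att consider
    (row) "a2 = b2" "\<forall>x. min a1 b1 \<le> x \<and> x \<le> max a1 b1 \<longrightarrow> (x, a2) \<in> A \<union> B"
  | (col) "a1 = b1" "\<forall>y. min a2 b2 \<le> y \<and> y \<le> max a2 b2 \<longrightarrow> (a1, y) \<in> A \<union> B"
    unfolding attacking_def by auto
  then show ?thesis
  proof cases
    case row
    have all: "\<forall>x. min a1 b1 \<le> x \<and> x \<le> max a1 b1 \<longrightarrow> (x, a2) \<in> A"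
    proof (intro allI impI)
      fix x assume "min a1 b1 \<le> x \<and> x \<le> max a1 b1"
      then show "(x, a2) \<in> A"
        using seg[where f="\<lambda>x. (x,a2)" and lo="min a1 b1" and hi="max a1 b1" and z=a1 and x=x, OF noadj]
          row a by (auto simp: share_edge_def)
    qed
    then have "(b1, a2) \<in> A" by auto
    then show ?thesis using row all unfolding attacking_def by auto
  next
    case col
    have all: "\<forall>y. min a2 b2 \<le> y \<and> y \<le> max a2 b2 \<longrightarrow> (a1, y) \<in> A"
    proof (intro allI impI)
      fix y assume "min a2 b2 \<le> y \<and> y \<le> max a2 b2"
      then show "(a1, y) \<in> A"
        using seg[where f="\<lambda>y. (a1,y)" and lo="min a2 b2" and hi="max a2 b2" and z=a2 and x=y, OF noadj]
          col a by (auto simp: share_edge_def)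
    qed
    then have "(a1, b2) \<in> A" by auto
    then show ?thesis using col all unfolding attacking_def by auto
  qed
qed

lemma att_side':
  assumes s: "sep A B" and a: "a \<in> A" and att: "attacking (A\<union>B) a b"
  shows "b \<in> A \<and> attacking A a b"
  using att_side[OF s, of "fst a" "snd a" "fst b" "snd b"] a att by simp

lemma config_split:
  assumes s: "sep A B"
  shows "rook_config (A\<union>B) C \<longleftrightarrow> C \<subseteq> A\<union>B \<and> rook_config A (C\<inter>A) \<and> rook_config B (C\<inter>B)"
proof
  assume h: "rook_config (A\<union>B) C"
  then show "C \<subseteq> A\<union>B \<and> rook_config A (C\<inter>A) \<and> rook_config B (C\<inter>B)"
  proof (intro conjI)
    show "C \<subseteq> A\<union>B" using h unfolding rook_config_def by blast
    show "rook_config A (C\<inter>A)" unfolding rook_config_def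
    proof (intro conjI ballI impI)
      fix a b assume "a \<in> C\<inter>A" "b \<in> C\<inter>A" "a \<noteq> b"
      then have "\<not> attacking (A\<union>B) a b" using h unfolding rook_config_def by blast
      then show "\<not> attacking A a b" using attacking_mono[of A a b "A\<union>B"] by blast
    qed blast
    show "rook_config B (C\<inter>B)" unfolding rook_config_def
    proof (intro conjI ballI impI)
      fix a b assume "a \<in> C\<inter>B" "b \<in> C\<inter>B" "a \<noteq> b"
      then have "\<not> attacking (A\<union>B) a b" using h unfolding rook_config_def by blast
      then show "\<not> attacking B a b" using attacking_mono[of B a b "A\<union>B"] by blast
    qed blast
  qed
next
  assume h: "C \<subseteq> A\<union>B \<and> rook_config A (C\<inter>A) \<and> rook_config B (C\<inter>B)"
  have s': "sep B A" using sep_sym[OF s] .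
  have cA: "\<And>x y. x\<in>C\<inter>A \<Longrightarrow> y\<in>C\<inter>A \<Longrightarrow> x\<noteq>y \<Longrightarrow> \<not>attacking A x y"
    using h unfolding rook_config_def by blast
  have cB: "\<And>x y. x\<in>C\<inter>B \<Longrightarrow> y\<in>C\<inter>B \<Longrightarrow> x\<noteq>y \<Longrightarrow> \<not>attacking B x y"
    using h unfolding rook_config_def by blast
  show "rook_config (A\<union>B) C"
    unfolding rook_config_def
  proof (intro conjI ballI impI)
    show "C \<subseteq> A \<union> B" using h by blast
    fix a b assume ab: "a \<in> C" "b \<in> C" "a \<noteq> b"
    show "\<not> attacking (A \<union> B) a b"
    proof
      assume att: "attacking (A \<union> B) a b"
      show False
      proof (cases "a \<in> A")
        case True
        have "b \<in> A" "attacking A a b" using att_side'[OF s True att] by auto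
        then show False using cA[of a b] ab True by blast
      next
        case False
        then have "a \<in> B" using ab h by blast
        moreover have "attacking (B \<union> A) a b" using att by (simp add: Un_commute)
        ultimately have "b \<in> B" "attacking B a b" using att_side'[OF s'] by blast+
        then show False using cB[of a b] ab \<open>a \<in> B\<close> by blast
      qed
    qed
  qed
qed



lemma hull3:
  fixes a b c z :: int
  shows "min a b \<le> z \<Longrightarrow> z \<le> max a b \<Longrightarrow> (min a c \<le> z \<and> z \<le> max a c) \<or> (min c b \<le> z \<and> z \<le> max c b)"
  by linarith

lemma key:
  assumes C: "rook_config P C" and ij: "(i,j) \<in> C" and kl: "(k,l) \<in> C"
    and r: "\<forall>x y. min i k \<le> x \<and> x \<le> max i k \<and> min j l \<le> y \<and> y \<le> max j l \<longrightarrow> (x,y) \<in> P"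
    and R: "(x,y) \<in> C" "(x,y) \<noteq> (i,j)" "(x,y) \<noteq> (k,l)"
  shows "\<not> attacking P (x,y) (i,l)"
proof
  assume att: "attacking P (x,y) (i,l)"
  have nat: "\<not> attacking P (x,y) (k,l)" "\<not> attacking P (x,y) (i,j)"
    using C R ij kl unfolding rook_config_def by blast+
  from att have "(y = l \<and> (\<forall>z. min x i \<le> z \<and> z \<le> max x i \<longrightarrow> (z, y) \<in> P)) \<or>
     (x = i \<and> (\<forall>z. min y l \<le> z \<and> z \<le> max y l \<longrightarrow> (x, z) \<in> P))"
    unfolding attacking_def by simp
  then show False
  proof (elim disjE conjE)
    assume row: "y = l" "\<forall>z. min x i \<le> z \<and> z \<le> max x i \<longrightarrow> (z, y) \<in> P"
    have "\<forall>z. min x k \<le> z \<and> z \<le> max x k \<longrightarrow> (z, y) \<in> P"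
    proof (intro allI impI)
      fix z assume h: "min x k \<le> z \<and> z \<le> max x k"
      then have "(min x i \<le> z \<and> z \<le> max x i) \<or> (min i k \<le> z \<and> z \<le> max i k)"
        using hull3[of x k z i] by blast
      then show "(z, y) \<in> P"
      proof
        assume "min x i \<le> z \<and> z \<le> max x i" then show ?thesis using row(2) by blast
      next
        assume h2: "min i k \<le> z \<and> z \<le> max i k"
        have "min j l \<le> l \<and> l \<le> max j l" by simp
        then show ?thesis using r h2 row(1) by blast
      qed
    qed
    then have "attacking P (x,y) (k,l)" unfolding attacking_def using row(1) by simp
    then show False using nat by blast
  next
    assume col: "x = i" "\<forall>z. min y l \<le> z \<and> z \<le> max y l \<longrightarrow> (x, z) \<in> P"
    have "\<forall>z. min y j \<le> z \<and> z \<le> max y j \<longrightarrow> (x, z) \<in> P"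
    proof (intro allI impI)
      fix z assume h: "min y j \<le> z \<and> z \<le> max y j"
      then have "(min y l \<le> z \<and> z \<le> max y l) \<or> (min l j \<le> z \<and> z \<le> max l j)"
        using hull3[of y j z l] by blast
      then show "(x, z) \<in> P"
      proof
        assume "min y l \<le> z \<and> z \<le> max y l" then show ?thesis using col(2) by blast
      next
        assume h2: "min l j \<le> z \<and> z \<le> max l j"
        then have h3: "min j l \<le> z \<and> z \<le> max j l" by (simp add: min.commute max.commute)
        have "min i k \<le> i \<and> i \<le> max i k" by simp
        then show ?thesis using r h3 col(1) by blast
      qed
    qed
    then have "attacking P (x,y) (i,j)" unfolding attacking_def using col(1) by simp
    then show False using nat by blast
  qed
qed

lemma switch_pres:
  assumes C: "rook_config P C" and fin: "finite P" and sw: "switch P C D"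
  shows "rook_config P D \<and> card D = card C"
proof -
  obtain i j k l where ij: "(i, j) \<in> C" and kl: "(k, l) \<in> C" and ik: "i \<noteq> k" and jl: "j \<noteq> l"
    and r: "\<forall>x y. min i k \<le> x \<and> x \<le> max i k \<and> min j l \<le> y \<and> y \<le> max j l \<longrightarrow> (x, y) \<in> P"
    and D: "D = (C - {(i, j), (k, l)}) \<union> {(i, l), (k, j)}"
    using sw unfolding switch_def by blast
  have ri: "\<And>x y. min i k \<le> x \<Longrightarrow> x \<le> max i k \<Longrightarrow> min j l \<le> y \<Longrightarrow> y \<le> max j l \<Longrightarrow> (x, y) \<in> P"
    using r by blast
  have r': "\<forall>x y. min k i \<le> x \<and> x \<le> max k i \<and> min l j \<le> y \<and> y \<le> max l j \<longrightarrow> (x, y) \<in> P"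
    using ri by (simp add: min.commute max.commute)
  have ilP: "(i,l) \<in> P" by (rule ri) auto
  have kjP: "(k,j) \<in> P" by (rule ri) auto
  have CP: "C \<subseteq> P" using C unfolding rook_config_def by blast
  have cC: "\<And>x y. x\<in>C \<Longrightarrow> y\<in>C \<Longrightarrow> x\<noteq>y \<Longrightarrow> \<not>attacking P x y"
    using C unfolding rook_config_def by blast
  have il: "(i,l) \<notin> C"
  proof
    assume "(i,l) \<in> C"
    moreover have "\<forall>y. min j l \<le> y \<and> y \<le> max j l \<longrightarrow> (i, y) \<in> P"
      using ri by simp
    then have "attacking P (i,j) (i,l)" unfolding attacking_def by simp
    ultimately show False using cC[of "(i,j)" "(i,l)"] ij jl by simp
  qed
  have kj: "(k,j) \<notin> C"
  proof
    assume "(k,j) \<in> C"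
    moreover have "\<forall>y. min l j \<le> y \<and> y \<le> max l j \<longrightarrow> (k, y) \<in> P"
      using ri by (simp add: min.commute max.commute)
    then have "attacking P (k,l) (k,j)" unfolding attacking_def by simp
    ultimately show False using cC[of "(k,l)" "(k,j)"] kl jl by simp
  qed
  have finC: "finite C" using CP fin finite_subset by blast
  have sub: "{(i, j), (k, l)} \<subseteq> C" using ij kl by blast
  have c0: "card {(i, j), (k, l)} = 2" using ik by simp
  have c0': "card {(i, l), (k, j)} = 2" using ik by simp
  have c1: "card (C - {(i, j), (k, l)}) = card C - 2"
    using card_Diff_subset[OF _ sub] finC c0 finite_subset[OF sub finC] by simp
  have c2: "card C \<ge> 2"
    using card_mono[OF finC sub] c0 by simp
  have dis: "(C - {(i, j), (k, l)}) \<inter> {(i, l), (k, j)} = {}" using il kj by blast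
  have "card D = card (C - {(i, j), (k, l)}) + card {(i, l), (k, j)}"
    unfolding D by (rule card_Un_disjoint) (use finC dis in auto)
  then have cardD: "card D = card C" using c1 c2 c0' by simp
  have new: "\<not> attacking P R (i,l) \<and> \<not> attacking P R (k,j)"
    if "R \<in> C" "R \<noteq> (i,j)" "R \<noteq> (k,l)" for R
  proof -
    obtain x y where R: "R = (x,y)" by fastforce
    show ?thesis using key[OF C ij kl r, of x y] key[OF C kl ij r', of x y] that unfolding R by blast
  qed
  have nn: "\<not> attacking P (i,l) (k,j)" "\<not> attacking P (k,j) (i,l)"
    using ik jl unfolding attacking_def by auto
  have cfg: "rook_config P D" unfolding rook_config_def
  proof (intro conjI ballI impI)
    show "D \<subseteq> P" using D CP ilP kjP by blast
    fix a b assume a: "a \<in> D" and b: "b \<in> D" and ab: "a \<noteq> b"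
    show "\<not> attacking P a b"
    proof (cases "a \<in> {(i,l),(k,j)}")
      case True
      show ?thesis
      proof (cases "b \<in> {(i,l),(k,j)}")
        case True
        with \<open>a \<in> {(i,l),(k,j)}\<close> ab nn show ?thesis by auto
      next
        case False
        then have "b \<in> C" "b \<noteq> (i,j)" "b \<noteq> (k,l)" using b D by auto
        then have "\<not> attacking P b a" using new[of b] True by blast
        then show ?thesis using attacking_sym by blast
      qed
    next
      case False
      then have a': "a \<in> C" "a \<noteq> (i,j)" "a \<noteq> (k,l)" using a D by auto
      show ?thesis
      proof (cases "b \<in> {(i,l),(k,j)}")
        case True
        then show ?thesis using new[OF a'] by blast
      next
        case False
        then have "b \<in> C" using b D by auto
        then show ?thesis using a' ab cC by blast
      qed
    qed
  qed
  show ?thesis using cfg cardD by blast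
qed

lemma switch_star_pres:
  assumes "(switch P)\<^sup>*\<^sup>* C D" and "rook_config P C" and "finite P"
  shows "rook_config P D \<and> card D = card C"
  using assms
proof (induction rule: rtranclp_induct)
  case base then show ?case by simp
next
  case (step D E)
  then show ?case using switch_pres[of P D E] by simp
qed

lemma switchI:
  assumes "(i, j) \<in> C" "(k, l) \<in> C" "i \<noteq> k" "j \<noteq> l"
    and "\<And>x y. min i k \<le> x \<Longrightarrow> x \<le> max i k \<Longrightarrow> min j l \<le> y \<Longrightarrow> y \<le> max j l \<Longrightarrow> (x, y) \<in> P"
    and "D = (C - {(i, j), (k, l)}) \<union> {(i, l), (k, j)}"
  shows "switch P C D"
  unfolding switch_def
  apply (rule exI[of _ i], rule exI[of _ j], rule exI[of _ k], rule exI[of _ l])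
  using assms by blast

lemma switch_split_one:
  assumes s: "sep A B" and ij: "(i, j) \<in> C" and kl: "(k, l) \<in> C" and ik: "i \<noteq> k" and jl: "j \<noteq> l"
    and r: "\<forall>x y. min i k \<le> x \<and> x \<le> max i k \<and> min j l \<le> y \<and> y \<le> max j l \<longrightarrow> (x, y) \<in> A \<union> B"
    and D: "D = (C - {(i, j), (k, l)}) \<union> {(i, l), (k, j)}"
    and a: "(i,j) \<in> A" and CU: "C \<subseteq> A \<union> B"
  shows "D \<subseteq> A \<union> B \<and> switch A (C\<inter>A) (D\<inter>A) \<and> D \<inter> B = C \<inter> B"
proof -
  have rA: "\<forall>x y. min i k \<le> x \<and> x \<le> max i k \<and> min j l \<le> y \<and> y \<le> max j l \<longrightarrow> (x, y) \<in> A"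
    using rect[OF s r a] .
  have ri: "\<And>x y. min i k \<le> x \<Longrightarrow> x \<le> max i k \<Longrightarrow> min j l \<le> y \<Longrightarrow> y \<le> max j l \<Longrightarrow> (x, y) \<in> A"
    using rA by blast
  have in4: "(i,j) \<in> A" "(k,l) \<in> A" "(i,l) \<in> A" "(k,j) \<in> A" by (rule ri; simp)+
  have dj: "A \<inter> B = {}" using s sep_def by blast
  have eqA: "D \<inter> A = (C \<inter> A - {(i, j), (k, l)}) \<union> {(i, l), (k, j)}"
    using D in4 by auto
  have "switch A (C\<inter>A) (D\<inter>A)"
    by (rule switchI[OF _ _ ik jl ri eqA]) (use ij kl in4 in auto)
  moreover have "D \<inter> B = C \<inter> B" using D in4 dj by auto
  moreover have "D \<subseteq> A \<union> B" using D in4 CU by auto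
  ultimately show ?thesis by blast
qed

lemma switch_split_step:
  assumes s: "sep A B" and CU: "C \<subseteq> A \<union> B" and sw: "switch (A \<union> B) C D"
  shows "D \<subseteq> A \<union> B \<and> (switch A)\<^sup>*\<^sup>* (C\<inter>A) (D\<inter>A) \<and> (switch B)\<^sup>*\<^sup>* (C\<inter>B) (D\<inter>B)"
proof -
  obtain i j k l where ij: "(i, j) \<in> C" and kl: "(k, l) \<in> C" and ik: "i \<noteq> k" and jl: "j \<noteq> l"
    and r: "\<forall>x y. min i k \<le> x \<and> x \<le> max i k \<and> min j l \<le> y \<and> y \<le> max j l \<longrightarrow> (x, y) \<in> A \<union> B"
    and D: "D = (C - {(i, j), (k, l)}) \<union> {(i, l), (k, j)}"
    using sw unfolding switch_def by blast
  show ?thesis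
  proof (cases "(i,j) \<in> A")
    case True
    from switch_split_one[OF s ij kl ik jl r D True CU]
    have "D \<subseteq> A \<union> B" "switch A (C\<inter>A) (D\<inter>A)" "D \<inter> B = C \<inter> B" by blast+
    then show ?thesis by (metis r_into_rtranclp rtranclp.rtrancl_refl)
  next
    case False
    then have b: "(i,j) \<in> B" using ij CU by blast
    have r': "\<forall>x y. min i k \<le> x \<and> x \<le> max i k \<and> min j l \<le> y \<and> y \<le> max j l \<longrightarrow> (x, y) \<in> B \<union> A"
      using r by blast
    have CU': "C \<subseteq> B \<union> A" using CU by blast
    from switch_split_one[OF sep_sym[OF s] ij kl ik jl r' D b CU']
    have "D \<subseteq> B \<union> A" "switch B (C\<inter>B) (D\<inter>B)" "D \<inter> A = C \<inter> A" by blast+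
    then show ?thesis by (metis r_into_rtranclp rtranclp.rtrancl_refl Un_commute)
  qed
qed

lemma switch_split:
  assumes s: "sep A B" and sw: "(switch (A \<union> B))\<^sup>*\<^sup>* C D" and CU: "C \<subseteq> A \<union> B"
  shows "D \<subseteq> A \<union> B \<and> (switch A)\<^sup>*\<^sup>* (C\<inter>A) (D\<inter>A) \<and> (switch B)\<^sup>*\<^sup>* (C\<inter>B) (D\<inter>B)"
  using sw
proof (induction rule: rtranclp_induct)
  case base then show ?case using CU by simp
next
  case (step D E)
  from step.IH have h1: "D \<subseteq> A \<union> B" "(switch A)\<^sup>*\<^sup>* (C\<inter>A) (D\<inter>A)" "(switch B)\<^sup>*\<^sup>* (C\<inter>B) (D\<inter>B)"
    by blast+
  from switch_split_step[OF s h1(1) step.hyps(2)]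
  have h2: "E \<subseteq> A \<union> B" "(switch A)\<^sup>*\<^sup>* (D\<inter>A) (E\<inter>A)" "(switch B)\<^sup>*\<^sup>* (D\<inter>B) (E\<inter>B)"
    by blast+
  show ?case using h2(1) rtranclp_trans[OF h1(2) h2(2)] rtranclp_trans[OF h1(3) h2(3)] by blast
qed

lemma switch_lift_step:
  assumes AU: "A \<subseteq> U" and E: "E \<inter> A = {}" and sw: "switch A C D" and CA: "C \<subseteq> A"
  shows "D \<subseteq> A \<and> switch U (C \<union> E) (D \<union> E)"
proof -
  obtain i j k l where ij: "(i, j) \<in> C" and kl: "(k, l) \<in> C" and ik: "i \<noteq> k" and jl: "j \<noteq> l"
    and r: "\<forall>x y. min i k \<le> x \<and> x \<le> max i k \<and> min j l \<le> y \<and> y \<le> max j l \<longrightarrow> (x, y) \<in> A"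
    and D: "D = (C - {(i, j), (k, l)}) \<union> {(i, l), (k, j)}"
    using sw unfolding switch_def by blast
  have ri: "\<And>x y. min i k \<le> x \<Longrightarrow> x \<le> max i k \<Longrightarrow> min j l \<le> y \<Longrightarrow> y \<le> max j l \<Longrightarrow> (x, y) \<in> A"
    using r by blast
  have riU: "\<And>x y. min i k \<le> x \<Longrightarrow> x \<le> max i k \<Longrightarrow> min j l \<le> y \<Longrightarrow> y \<le> max j l \<Longrightarrow> (x, y) \<in> U"
    using ri AU by blast
  have in2: "(i,l) \<in> A" "(k,j) \<in> A" by (rule ri; simp)+
  have ijA: "(i,j) \<in> A" "(k,l) \<in> A" using ij kl CA by blast+
  have eq: "D \<union> E = (C \<union> E - {(i, j), (k, l)}) \<union> {(i, l), (k, j)}"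
    using D E ijA by auto
  have "switch U (C \<union> E) (D \<union> E)"
    by (rule switchI[OF _ _ ik jl riU eq]) (use ij kl in auto)
  moreover have "D \<subseteq> A" using D CA in2 by auto
  ultimately show ?thesis by blast
qed

lemma switch_lift:
  assumes AU: "A \<subseteq> U" and E: "E \<inter> A = {}" and sw: "(switch A)\<^sup>*\<^sup>* C D" and CA: "C \<subseteq> A"
  shows "D \<subseteq> A \<and> (switch U)\<^sup>*\<^sup>* (C \<union> E) (D \<union> E)"
  using sw
proof (induction rule: rtranclp_induct)
  case base then show ?case using CA by simp
next
  case (step D F)
  from step.IH have h1: "D \<subseteq> A" "(switch U)\<^sup>*\<^sup>* (C \<union> E) (D \<union> E)" by blast+
  from switch_lift_step[OF AU E step.hyps(2) h1(1)]
  have "F \<subseteq> A" "switch U (D \<union> E) (F \<union> E)" by blast+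
  then show ?case using h1(2) by (simp add: rtranclp.rtrancl_into_rtrancl)
qed



lemma K_sub: "k_rook_configs P k \<subseteq> Pow P"
  unfolding k_rook_configs_def rook_config_def by blast

lemma K_fin: "finite P \<Longrightarrow> finite (k_rook_configs P k)"
  using K_sub finite_subset by blast

lemma R_sub: "switch_equiv P k \<subseteq> k_rook_configs P k \<times> k_rook_configs P k"
  unfolding switch_equiv_def by blast

lemma cls_fin: "finite P \<Longrightarrow> finite (k_rook_configs P k // switch_equiv P k)"
  by (rule finite_quotient[OF K_fin R_sub])

lemma class_mem: "D \<in> switch_equiv P k `` {C} \<longleftrightarrow>
   C \<in> k_rook_configs P k \<and> D \<in> k_rook_configs P k \<and> (switch P)\<^sup>*\<^sup>* C D"
  unfolding switch_equiv_def by blast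

lemma cls_props:
  assumes "X \<in> k_rook_configs P k // switch_equiv P k"
  obtains C0 where "C0 \<in> k_rook_configs P k" "X = switch_equiv P k `` {C0}" "C0 \<in> X"
    "X \<subseteq> k_rook_configs P k"
proof -
  from assms obtain C0 where X: "X = switch_equiv P k `` {C0}" and C0: "C0 \<in> k_rook_configs P k"
    by (rule quotientE)
  have "C0 \<in> X" unfolding X class_mem using C0 by simp
  moreover have "X \<subseteq> k_rook_configs P k" unfolding X using class_mem by blast
  ultimately show ?thesis using that X C0 by blast
qed

lemma Kunion:
  assumes s: "sep A B" and fA: "finite A" and fB: "finite B"
    and C: "C \<in> k_rook_configs A i" and D: "D \<in> k_rook_configs B j"
  shows "C \<union> D \<in> k_rook_configs (A \<union> B) (i + j)"
proof -
  have cC: "rook_config A C" "card C = i" using C unfolding k_rook_configs_def by blast+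
  have cD: "rook_config B D" "card D = j" using D unfolding k_rook_configs_def by blast+
  have CA: "C \<subseteq> A" using cC unfolding rook_config_def by blast
  have DB: "D \<subseteq> B" using cD unfolding rook_config_def by blast
  have dj: "A \<inter> B = {}" using s sep_def by blast
  have e1: "(C \<union> D) \<inter> A = C" using CA DB dj by blast
  have e2: "(C \<union> D) \<inter> B = D" using CA DB dj by blast
  have "rook_config (A \<union> B) (C \<union> D)"
    using config_split[OF s, of "C \<union> D"] e1 e2 cC cD CA DB by auto
  moreover have "card (C \<union> D) = i + j"
    using card_Un_disjoint[of C D] finite_subset[OF CA fA] finite_subset[OF DB fB] CA DB dj cC cD
    by auto
  ultimately show ?thesis unfolding k_rook_configs_def by blast
qed

lemma class_eq:
  assumes s: "sep A B" and fA: "finite A" and fB: "finite B"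
    and C0: "C0 \<in> k_rook_configs A i" and D0: "D0 \<in> k_rook_configs B j"
  shows "(\<lambda>(C,D). C \<union> D) ` (switch_equiv A i `` {C0} \<times> switch_equiv B j `` {D0})
       = switch_equiv (A \<union> B) (i + j) `` {C0 \<union> D0}"
proof (intro equalityI subsetI)
  have C0A: "C0 \<subseteq> A" using C0 K_sub by blast
  have D0B: "D0 \<subseteq> B" using D0 K_sub by blast
  have dj: "A \<inter> B = {}" using s sep_def by blast
  have U0: "C0 \<union> D0 \<in> k_rook_configs (A \<union> B) (i + j)" using Kunion[OF s fA fB C0 D0] .
  {
    fix Z assume "Z \<in> (\<lambda>(C,D). C \<union> D) ` (switch_equiv A i `` {C0} \<times> switch_equiv B j `` {D0})"
    then obtain C D where Z: "Z = C \<union> D" and C: "C \<in> switch_equiv A i `` {C0}"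
      and D: "D \<in> switch_equiv B j `` {D0}" by auto
    have CK: "C \<in> k_rook_configs A i" and swC: "(switch A)\<^sup>*\<^sup>* C0 C" using C class_mem by blast+
    have DK: "D \<in> k_rook_configs B j" and swD: "(switch B)\<^sup>*\<^sup>* D0 D" using D class_mem by blast+
    have CA: "C \<subseteq> A" using CK K_sub by blast
    have l1: "(switch (A \<union> B))\<^sup>*\<^sup>* (C0 \<union> D0) (C \<union> D0)"
      using switch_lift[of A "A \<union> B" D0, OF _ _ swC C0A] D0B dj by blast
    have l2: "(switch (A \<union> B))\<^sup>*\<^sup>* (D0 \<union> C) (D \<union> C)"
      using switch_lift[of B "A \<union> B" C, OF _ _ swD D0B] CA dj by blast
    have "(switch (A \<union> B))\<^sup>*\<^sup>* (C0 \<union> D0) (C \<union> D)"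
      using rtranclp_trans[OF l1] l2 by (simp add: Un_commute)
    then show "Z \<in> switch_equiv (A \<union> B) (i + j) `` {C0 \<union> D0}"
      unfolding class_mem Z using U0 Kunion[OF s fA fB CK DK] by blast
  }
  {
    fix Z assume Z: "Z \<in> switch_equiv (A \<union> B) (i + j) `` {C0 \<union> D0}"
    have ZK: "Z \<in> k_rook_configs (A \<union> B) (i + j)" and sw: "(switch (A \<union> B))\<^sup>*\<^sup>* (C0 \<union> D0) Z"
      using Z class_mem by blast+
    have e1: "(C0 \<union> D0) \<inter> A = C0" using C0A D0B dj by blast
    have e2: "(C0 \<union> D0) \<inter> B = D0" using C0A D0B dj by blast
    have sp: "Z \<subseteq> A \<union> B" "(switch A)\<^sup>*\<^sup>* C0 (Z \<inter> A)" "(switch B)\<^sup>*\<^sup>* D0 (Z \<inter> B)"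
      using switch_split[OF s sw] C0A D0B e1 e2 by auto
    have rC0: "rook_config A C0" "card C0 = i" using C0 unfolding k_rook_configs_def by blast+
    have rD0: "rook_config B D0" "card D0 = j" using D0 unfolding k_rook_configs_def by blast+
    have pA: "rook_config A (Z \<inter> A) \<and> card (Z \<inter> A) = card C0"
      using switch_star_pres[OF sp(2) rC0(1) fA] .
    have pB: "rook_config B (Z \<inter> B) \<and> card (Z \<inter> B) = card D0"
      using switch_star_pres[OF sp(3) rD0(1) fB] .
    have a: "Z \<inter> A \<in> switch_equiv A i `` {C0}"
      unfolding class_mem using C0 pA rC0 sp(2) unfolding k_rook_configs_def by auto
    have b: "Z \<inter> B \<in> switch_equiv B j `` {D0}"
      unfolding class_mem using D0 pB rD0 sp(3) unfolding k_rook_configs_def by auto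
    have "Z = (\<lambda>(C,D). C \<union> D) (Z \<inter> A, Z \<inter> B)" using sp(1) by auto
    then show "Z \<in> (\<lambda>(C,D). C \<union> D) ` (switch_equiv A i `` {C0} \<times> switch_equiv B j `` {D0})"
      using a b by blast
  }
qed

lemma proj_A:
  assumes "X \<subseteq> Pow A" "Y \<subseteq> Pow B" "Y \<noteq> {}" "A \<inter> B = {}"
  shows "(\<lambda>Z. Z \<inter> A) ` ((\<lambda>(C,D). C \<union> D) ` (X \<times> Y)) = X"
proof (intro equalityI subsetI)
  fix W assume "W \<in> (\<lambda>Z. Z \<inter> A) ` ((\<lambda>(C,D). C \<union> D) ` (X \<times> Y))"
  then obtain C D where "C \<in> X" "D \<in> Y" "W = (C \<union> D) \<inter> A" by auto
  moreover have "(C \<union> D) \<inter> A = C" using assms calculation by blast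
  ultimately show "W \<in> X" by simp
next
  fix C assume C: "C \<in> X"
  obtain D where D: "D \<in> Y" using assms by blast
  have "(C \<union> D) \<inter> A = C" using assms C D by blast
  then show "C \<in> (\<lambda>Z. Z \<inter> A) ` ((\<lambda>(C,D). C \<union> D) ` (X \<times> Y))"
    using C D by (metis (no_types, lifting) SigmaI case_prod_conv image_eqI)
qed

lemma proj_B:
  assumes "X \<subseteq> Pow A" "Y \<subseteq> Pow B" "X \<noteq> {}" "A \<inter> B = {}"
  shows "(\<lambda>Z. Z \<inter> B) ` ((\<lambda>(C,D). C \<union> D) ` (X \<times> Y)) = Y"
proof (intro equalityI subsetI)
  fix W assume "W \<in> (\<lambda>Z. Z \<inter> B) ` ((\<lambda>(C,D). C \<union> D) ` (X \<times> Y))"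
  then obtain C D where "C \<in> X" "D \<in> Y" "W = (C \<union> D) \<inter> B" by auto
  moreover have "(C \<union> D) \<inter> B = D" using assms calculation by blast
  ultimately show "W \<in> Y" by simp
next
  fix D assume D: "D \<in> Y"
  obtain C where C: "C \<in> X" using assms by blast
  have "(C \<union> D) \<inter> B = D" using assms C D by blast
  then show "D \<in> (\<lambda>Z. Z \<inter> B) ` ((\<lambda>(C,D). C \<union> D) ` (X \<times> Y))"
    using C D by (metis (no_types, lifting) SigmaI case_prod_conv image_eqI)
qed



lemma count:
  assumes s: "sep A B" and fA: "finite A" and fB: "finite B"
  shows "card (k_rook_configs (A \<union> B) n // switch_equiv (A \<union> B) n)
    = (\<Sum>i\<le>n. card (k_rook_configs A i // switch_equiv A i) * card (k_rook_configs B (n-i) // switch_equiv B (n-i)))"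
proof -
  define S where "S = (SIGMA i:{..n}. (k_rook_configs A i // switch_equiv A i) \<times> (k_rook_configs B (n-i) // switch_equiv B (n-i)))"
  define h :: "nat \<times> cell set set \<times> cell set set \<Rightarrow> cell set set"
    where "h = (\<lambda>(i, X, Y). (\<lambda>(C,D). C \<union> D) ` (X \<times> Y))"
  have dj: "A \<inter> B = {}" using s sep_def by blast
  have inj: "inj_on h S"
  proof (rule inj_onI)
    fix p q assume p: "p \<in> S" and q: "q \<in> S" and hpq: "h p = h q"
    obtain i X Y where pp: "p = (i, X, Y)" by (cases p) auto
    obtain i' X' Y' where qq: "q = (i', X', Y')" by (cases q) auto
    have X: "X \<in> k_rook_configs A i // switch_equiv A i" and Y: "Y \<in> k_rook_configs B (n-i) // switch_equiv B (n-i)"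
      using p pp S_def by auto
    have X': "X' \<in> k_rook_configs A i' // switch_equiv A i'" and Y': "Y' \<in> k_rook_configs B (n-i') // switch_equiv B (n-i')"
      using q qq S_def by auto
    obtain C0 where C0: "C0 \<in> X" "X \<subseteq> k_rook_configs A i" using cls_props[OF X] by metis
    obtain D0 where D0: "D0 \<in> Y" "Y \<subseteq> k_rook_configs B (n-i)" using cls_props[OF Y] by metis
    obtain C1 where C1: "C1 \<in> X'" "X' \<subseteq> k_rook_configs A i'" using cls_props[OF X'] by metis
    obtain D1 where D1: "D1 \<in> Y'" "Y' \<subseteq> k_rook_configs B (n-i')" using cls_props[OF Y'] by metis
    have XA: "X \<subseteq> Pow A" "X' \<subseteq> Pow A" using C0 C1 K_sub by blast+
    have YB: "Y \<subseteq> Pow B" "Y' \<subseteq> Pow B" using D0 D1 K_sub by blast+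
    have e: "(\<lambda>(C,D). C \<union> D) ` (X \<times> Y) = (\<lambda>(C,D). C \<union> D) ` (X' \<times> Y')"
      using hpq unfolding pp qq h_def by simp
    have XX: "X = X'"
      using proj_A[OF XA(1) YB(1) _ dj] proj_A[OF XA(2) YB(2) _ dj] e D0 D1 by (metis empty_iff)
    have YY: "Y = Y'"
      using proj_B[OF XA(1) YB(1) _ dj] proj_B[OF XA(2) YB(2) _ dj] e C0 C1 by (metis empty_iff)
    have "card C0 = i" using C0 unfolding k_rook_configs_def by blast
    moreover have "card C0 = i'" using C0 C1 XX unfolding k_rook_configs_def by blast
    ultimately show "p = q" using pp qq XX YY by simp
  qed
  have img: "h ` S = k_rook_configs (A \<union> B) n // switch_equiv (A \<union> B) n"
  proof (intro equalityI subsetI)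
    fix Z assume "Z \<in> h ` S"
    then obtain i X Y where i: "i \<le> n" and X: "X \<in> k_rook_configs A i // switch_equiv A i"
      and Y: "Y \<in> k_rook_configs B (n-i) // switch_equiv B (n-i)" and Z: "Z = h (i, X, Y)"
      unfolding S_def by blast
    obtain C0 where C0: "C0 \<in> k_rook_configs A i" "X = switch_equiv A i `` {C0}" using cls_props[OF X] by metis
    obtain D0 where D0: "D0 \<in> k_rook_configs B (n-i)" "Y = switch_equiv B (n-i) `` {D0}" using cls_props[OF Y] by metis
    have "Z = switch_equiv (A \<union> B) (i + (n - i)) `` {C0 \<union> D0}"
      using class_eq[OF s fA fB C0(1) D0(1)] Z C0(2) D0(2) unfolding h_def by simp
    moreover have "C0 \<union> D0 \<in> k_rook_configs (A \<union> B) (i + (n - i))" using Kunion[OF s fA fB C0(1) D0(1)] .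
    ultimately show "Z \<in> k_rook_configs (A \<union> B) n // switch_equiv (A \<union> B) n"
      using i by (simp add: quotientI)
  next
    fix Z assume "Z \<in> k_rook_configs (A \<union> B) n // switch_equiv (A \<union> B) n"
    then obtain E where E: "E \<in> k_rook_configs (A \<union> B) n" and Z: "Z = switch_equiv (A \<union> B) n `` {E}"
      by (rule quotientE)
    have rE: "rook_config (A \<union> B) E" "card E = n" using E unfolding k_rook_configs_def by blast+
    have sp: "E \<subseteq> A \<union> B" "rook_config A (E \<inter> A)" "rook_config B (E \<inter> B)"
      using config_split[OF s] rE(1) by blast+
    have EE: "E = (E \<inter> A) \<union> (E \<inter> B)" using sp(1) by blast
    have fE: "finite E" using sp(1) fA fB finite_subset by blast
    have "card E = card (E \<inter> A) + card (E \<inter> B)"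
      using card_Un_disjoint[of "E \<inter> A" "E \<inter> B"] fE dj EE by auto
    then have cn: "card (E \<inter> A) \<le> n" "card (E \<inter> B) = n - card (E \<inter> A)" using rE(2) by auto
    define i where "i = card (E \<inter> A)"
    have C0: "E \<inter> A \<in> k_rook_configs A i" using sp(2) i_def unfolding k_rook_configs_def by blast
    have D0: "E \<inter> B \<in> k_rook_configs B (n - i)" using sp(3) cn(2) i_def unfolding k_rook_configs_def by blast
    have "h (i, switch_equiv A i `` {E \<inter> A}, switch_equiv B (n-i) `` {E \<inter> B})
       = switch_equiv (A \<union> B) (i + (n - i)) `` {(E \<inter> A) \<union> (E \<inter> B)}"
      using class_eq[OF s fA fB C0 D0] unfolding h_def by simp
    also have "\<dots> = Z" using Z EE cn(1) i_def by simp
    finally have "h (i, switch_equiv A i `` {E \<inter> A}, switch_equiv B (n-i) `` {E \<inter> B}) = Z" .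
    moreover have "(i, switch_equiv A i `` {E \<inter> A}, switch_equiv B (n-i) `` {E \<inter> B}) \<in> S"
      unfolding S_def using cn(1) i_def C0 D0 by (auto intro: quotientI)
    ultimately show "Z \<in> h ` S" by blast
  qed
  have "card (k_rook_configs (A \<union> B) n // switch_equiv (A \<union> B) n) = card S"
    using inj img by (metis card_image)
  also have "\<dots> = (\<Sum>i\<le>n. card ((k_rook_configs A i // switch_equiv A i) \<times> (k_rook_configs B (n-i) // switch_equiv B (n-i))))"
    unfolding S_def by (rule card_SigmaI) (auto simp: cls_fin fA fB)
  also have "\<dots> = (\<Sum>i\<le>n. card (k_rook_configs A i // switch_equiv A i) * card (k_rook_configs B (n-i) // switch_equiv B (n-i)))"
    by (simp add: card_cartesian_product)
  finally show ?thesis .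
qed

lemma rook_bound:
  assumes "finite P" "rook_config P C"
  shows "card C \<le> rook_number P"
proof -
  have "{card C | C. rook_config P C} \<subseteq> card ` Pow P" unfolding rook_config_def by blast
  then have "finite {card C | C. rook_config P C}" using assms(1) finite_subset by blast
  then show ?thesis unfolding rook_number_def using assms(2) by (intro Max_ge) auto
qed

lemma N_zero:
  assumes "finite P" "rook_number P < k"
  shows "switching_rook_number P k = 0"
proof -
  have "k_rook_configs P k = {}" using rook_bound[OF assms(1)] assms(2)
    unfolding k_rook_configs_def by fastforce
  then show ?thesis unfolding switching_rook_number_def by simp
qed

lemma coeff_srp:
  assumes "finite P"
  shows "coeff (switching_rook_poly P) n = int (switching_rook_number P n)"
proof -
  have "coeff (switching_rook_poly P) n = (\<Sum>k\<le>rook_number P. (if k = n then int (switching_rook_number P k) else 0))"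
    unfolding switching_rook_poly_def coeff_sum by simp
  also have "\<dots> = (if n \<in> {..rook_number P} then int (switching_rook_number P n) else 0)"
    by (rule sum.delta[OF finite_atMost])
  also have "\<dots> = int (switching_rook_number P n)" using N_zero[OF assms, of n] by auto
  finally show ?thesis .
qed

lemma srp_union:
  assumes s: "sep A B" and fA: "finite A" and fB: "finite B"
  shows "switching_rook_poly (A \<union> B) = switching_rook_poly A * switching_rook_poly B"
proof (rule poly_eqI)
  fix n
  have fU: "finite (A \<union> B)" using fA fB by simp
  show "coeff (switching_rook_poly (A \<union> B)) n = coeff (switching_rook_poly A * switching_rook_poly B) n"
    unfolding coeff_mult coeff_srp[OF fU] coeff_srp[OF fA] coeff_srp[OF fB]
    unfolding switching_rook_number_def count[OF s fA fB] by simp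
qed

lemma srp_empty: "switching_rook_poly {} = 1"
proof (rule poly_eqI)
  fix n
  have K: "k_rook_configs {} k = (if k = 0 then {{}} else {})" for k
    unfolding k_rook_configs_def rook_config_def by auto
  have q: "{{}} // r = {r `` {{}}}" for r :: "(cell set \<times> cell set) set"
    unfolding quotient_def by blast
  show "coeff (switching_rook_poly {}) n = coeff 1 n"
    unfolding coeff_srp[OF finite.emptyI] switching_rook_number_def K by (simp add: q)
qed



inductive reach :: "cell set \<Rightarrow> cell \<Rightarrow> cell \<Rightarrow> bool" for P where
  rrefl: "a \<in> P \<Longrightarrow> reach P a a"
| rstep: "reach P a b \<Longrightarrow> share_edge b c \<Longrightarrow> c \<in> P \<Longrightarrow> reach P a c"

lemma reach_mem: "reach P a b \<Longrightarrow> a \<in> P \<and> b \<in> P"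
  by (induction rule: reach.induct) auto

lemma reach_trans: "reach P b c \<Longrightarrow> reach P a b \<Longrightarrow> reach P a c"
  by (induction rule: reach.induct) (auto intro: reach.rstep)

lemma reach_sym: "reach P a b \<Longrightarrow> reach P b a"
proof (induction rule: reach.induct)
  case (rrefl a) then show ?case by (rule reach.rrefl)
next
  case (rstep a b c)
  have "b \<in> P" using reach_mem[OF rstep.hyps(1)] by blast
  then have "reach P c b" using reach.rstep[OF reach.rrefl[OF rstep.hyps(3)] share_edge_sym[OF rstep.hyps(2)]] by blast
  then show ?case using reach_trans rstep.IH by blast
qed

lemma reach_mono: "reach P a b \<Longrightarrow> P \<subseteq> Q \<Longrightarrow> reach Q a b"
  by (induction rule: reach.induct) (auto intro: reach.intros)

lemma path_butlast:
  assumes "is_path P (xs @ [c])" "xs \<noteq> []"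
  shows "is_path P xs \<and> share_edge (last xs) c \<and> c \<in> P"
proof -
  have a: "distinct xs" "set xs \<subseteq> P" "c \<in> P" using assms unfolding is_path_def by auto
  have e: "\<And>i. Suc i < length xs + 1 \<Longrightarrow> share_edge ((xs @ [c]) ! i) ((xs @ [c]) ! Suc i)"
    using assms unfolding is_path_def by auto
  have "share_edge (xs ! i) (xs ! Suc i)" if "Suc i < length xs" for i
    using e[of i] that by (simp add: nth_append)
  moreover have "share_edge (last xs) c"
  proof -
    have "share_edge ((xs @ [c]) ! (length xs - 1)) ((xs @ [c]) ! Suc (length xs - 1))"
      using e[of "length xs - 1"] assms(2) by simp
    moreover have "Suc (length xs - 1) = length xs" using assms(2) by simp
    ultimately show ?thesis using assms(2) by (simp add: nth_append last_conv_nth)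
  qed
  ultimately show ?thesis using a assms(2) unfolding is_path_def by blast
qed

lemma path_snoc:
  assumes "is_path P xs" "c \<in> P" "c \<notin> set xs" "share_edge (last xs) c"
  shows "is_path P (xs @ [c])"
proof -
  have ne: "xs \<noteq> []" using assms unfolding is_path_def by blast
  have "share_edge ((xs @ [c]) ! i) ((xs @ [c]) ! Suc i)" if "Suc i < length (xs @ [c])" for i
  proof (cases "Suc i < length xs")
    case True
    then show ?thesis using assms(1) unfolding is_path_def by (simp add: nth_append)
  next
    case False
    then have i: "i = length xs - 1" using that by simp
    then show ?thesis using assms(4) ne by (simp add: nth_append last_conv_nth)
  qed
  then show ?thesis using assms unfolding is_path_def by auto
qed

lemma path_take:
  assumes "is_path P xs" "0 < n"
  shows "is_path P (take n xs)"
proof -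
  have "take n xs \<noteq> []" using assms unfolding is_path_def by simp
  moreover have "distinct (take n xs)" using assms unfolding is_path_def by simp
  moreover have "set (take n xs) \<subseteq> P" using assms unfolding is_path_def by (meson order_trans set_take_subset)
  moreover have "share_edge (take n xs ! i) (take n xs ! Suc i)" if "Suc i < length (take n xs)" for i
    using assms that unfolding is_path_def by simp
  ultimately show ?thesis unfolding is_path_def by blast
qed

lemma path_to_reach: "is_path P xs \<Longrightarrow> reach P (hd xs) (last xs)"
proof (induction xs rule: rev_induct)
  case Nil then show ?case unfolding is_path_def by simp
next
  case (snoc c xs)
  show ?case
  proof (cases "xs = []")
    case True
    then show ?thesis using snoc.prems unfolding is_path_def by (auto intro: reach.rrefl)
  next
    case False
    from path_butlast[OF snoc.prems False]
    have "is_path P xs" "share_edge (last xs) c" "c \<in> P" by blast+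
    then show ?thesis using snoc.IH False by (auto intro: reach.rstep)
  qed
qed

lemma reach_to_path: "reach P a b \<Longrightarrow> \<exists>xs. is_path P xs \<and> hd xs = a \<and> last xs = b"
proof (induction rule: reach.induct)
  case (rrefl a)
  then show ?case by (intro exI[of _ "[a]"]) (simp add: is_path_def)
next
  case (rstep a b c)
  then obtain xs where xs: "is_path P xs" "hd xs = a" "last xs = b" by blast
  have ne: "xs \<noteq> []" using xs unfolding is_path_def by blast
  show ?case
  proof (cases "c \<in> set xs")
    case False
    then show ?thesis using path_snoc[OF xs(1) rstep.hyps(3) False] xs ne rstep.hyps(2)
      by (intro exI[of _ "xs @ [c]"]) simp
  next
    case True
    then obtain m where m: "m < length xs" "xs ! m = c" by (meson in_set_conv_nth)
    have p: "is_path P (take (Suc m) xs)" using path_take[OF xs(1)] by simp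
    have h: "hd (take (Suc m) xs) = a" using xs(2) ne by simp
    have l: "last (take (Suc m) xs) = c"
      using m by (simp add: take_Suc_conv_app_nth)
    show ?thesis using p h l by blast
  qed
qed

lemma edge_vertex: "share_edge a b \<Longrightarrow> share_vertex a b"
  unfolding share_edge_def share_vertex_def by auto

lemma polyomino_of_reach:
  assumes "finite Q" "Q \<noteq> {}" "\<And>a b. a \<in> Q \<Longrightarrow> b \<in> Q \<Longrightarrow> reach Q a b"
  shows "polyomino Q"
proof -
  have paths: "\<forall>A\<in>Q. \<forall>B\<in>Q. \<exists>xs. is_path Q xs \<and> hd xs = A \<and> last xs = B"
    using assms(3) reach_to_path by blast
  have "weakly_connected Q" unfolding weakly_connected_def
  proof (intro ballI)
    fix A B assume "A \<in> Q" "B \<in> Q"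
    then obtain xs where "is_path Q xs" "hd xs = A" "last xs = B" using paths by blast
    then show "\<exists>xs. xs \<noteq> [] \<and> hd xs = A \<and> last xs = B \<and> set xs \<subseteq> Q \<and>
        (\<forall>i. Suc i < length xs \<longrightarrow> share_vertex (xs ! i) (xs ! Suc i))"
      unfolding is_path_def using edge_vertex by blast
  qed
  then show ?thesis unfolding polyomino_def collection_def using assms paths by blast
qed

lemma polyomino_reach:
  assumes "polyomino Q" "a \<in> Q" "b \<in> Q"
  shows "reach Q a b"
proof -
  obtain xs where "is_path Q xs" "hd xs = a" "last xs = b" using assms unfolding polyomino_def by blast
  then show ?thesis using path_to_reach by blast
qed

lemma polyomino_union:
  assumes p1: "polyomino Q1" and p2: "polyomino Q2" and c: "c \<in> Q1" and d: "d \<in> Q2"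
    and cd: "c = d \<or> share_edge c d"
  shows "polyomino (Q1 \<union> Q2)"
proof (rule polyomino_of_reach)
  show "finite (Q1 \<union> Q2)" using p1 p2 unfolding polyomino_def collection_def by blast
  show "Q1 \<union> Q2 \<noteq> {}" using c by blast
  have r1: "reach (Q1 \<union> Q2) x y" if "x \<in> Q1" "y \<in> Q1" for x y
    using reach_mono[OF polyomino_reach[OF p1 that]] by blast
  have r2: "reach (Q1 \<union> Q2) x y" if "x \<in> Q2" "y \<in> Q2" for x y
    using reach_mono[OF polyomino_reach[OF p2 that]] by blast
  have rcd: "reach (Q1 \<union> Q2) c d"
    using cd c d by (auto intro: reach.intros)
  have r12: "reach (Q1 \<union> Q2) x y" if "x \<in> Q1" "y \<in> Q2" for x y
    using reach_trans[OF r2[OF d that(2)] reach_trans[OF rcd r1[OF that(1) c]]] .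
  fix a b assume "a \<in> Q1 \<union> Q2" "b \<in> Q1 \<union> Q2"
  then show "reach (Q1 \<union> Q2) a b"
    using r1 r2 r12 reach_sym by blast
qed

lemma comp_sub: "Q \<in> components P \<Longrightarrow> Q \<subseteq> P \<and> polyomino Q"
  unfolding components_def by blast

lemma comp_eq:
  assumes "Q1 \<in> components P" "Q2 \<in> components P" "c \<in> Q1" "d \<in> Q2" "c = d \<or> share_edge c d"
  shows "Q1 = Q2"
proof -
  have p1: "polyomino Q1" using comp_sub[OF assms(1)] by blast
  have p2: "polyomino Q2" using comp_sub[OF assms(2)] by blast
  have p: "polyomino (Q1 \<union> Q2)" using polyomino_union[OF p1 p2 assms(3,4,5)] .
  have s: "Q1 \<union> Q2 \<subseteq> P" using comp_sub[OF assms(1)] comp_sub[OF assms(2)] by blast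
  have m1: "\<And>Q'. Q1 \<subseteq> Q' \<Longrightarrow> Q' \<subseteq> P \<Longrightarrow> polyomino Q' \<Longrightarrow> Q' = Q1"
    using assms(1) unfolding components_def by blast
  have m2: "\<And>Q'. Q2 \<subseteq> Q' \<Longrightarrow> Q' \<subseteq> P \<Longrightarrow> polyomino Q' \<Longrightarrow> Q' = Q2"
    using assms(2) unfolding components_def by blast
  have "Q1 \<union> Q2 = Q1" using m1[OF _ s p] by blast
  moreover have "Q1 \<union> Q2 = Q2" using m2[OF _ s p] by blast
  ultimately show ?thesis by blast
qed

lemma comps_sep:
  assumes "Q1 \<in> components P" "Q2 \<in> components P" "Q1 \<noteq> Q2"
  shows "sep Q1 Q2"
  unfolding sep_def
proof (intro conjI ballI)
  show "Q1 \<inter> Q2 = {}"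
  proof (rule ccontr)
    assume "Q1 \<inter> Q2 \<noteq> {}"
    then obtain c where "c \<in> Q1" "c \<in> Q2" by blast
    then show False using comp_eq[OF assms(1,2), of c c] assms(3) by blast
  qed
  fix a b assume "a \<in> Q1" "b \<in> Q2"
  then show "\<not> share_edge a b" using comp_eq[OF assms(1,2), of a b] assms(3) by blast
qed

lemma single_poly: "polyomino {a}"
proof (rule polyomino_of_reach)
  fix x y assume "x \<in> {a}" "y \<in> {a}"
  then have "x = a" "y = a" by auto
  then show "reach {a} x y" using reach.rrefl[of a "{a}"] by simp
qed auto

lemma comp_exists:
  assumes fin: "finite P" and a: "a \<in> P"
  shows "\<exists>Q\<in>components P. a \<in> Q"
proof -
  define F where "F = {Q. a \<in> Q \<and> Q \<subseteq> P \<and> polyomino Q}"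
  have aF: "{a} \<in> F" unfolding F_def using single_poly a by blast
  have "F \<subseteq> Pow P" unfolding F_def by blast
  then have fF: "finite F" using fin finite_subset by blast
  have fc: "finite (card ` F)" using finite_imageI[OF fF] .
  have nc: "card ` F \<noteq> {}" using aF by blast
  have "Max (card ` F) \<in> card ` F" using Max_in[OF fc nc] .
  then obtain Q where Q2': "Max (card ` F) = card Q" and Q1: "Q \<in> F" by (rule imageE)
  have Q: "Q \<in> F" "card Q = Max (card ` F)" using Q1 Q2' by simp_all
  have QP: "Q \<subseteq> P" and pQ: "polyomino Q" and aQ: "a \<in> Q" using Q(1) unfolding F_def by blast+
  have maxi: "Q' = Q" if h: "Q \<subseteq> Q'" "Q' \<subseteq> P" "polyomino Q'" for Q'
  proof -
    have "Q' \<in> F" using h aQ unfolding F_def by blast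
    then have "card Q' \<in> card ` F" by blast
    then have "card Q' \<le> Max (card ` F)" using Max_ge[OF fc] by blast
    then have c1: "card Q' \<le> card Q" using Q(2) by simp
    have fQ': "finite Q'" using h(2) fin finite_subset by blast
    have "card Q \<le> card Q'" using card_mono[OF fQ' h(1)] .
    then have "card Q = card Q'" using c1 by simp
    then have "Q = Q'" using card_subset_eq[OF fQ' h(1)] by blast
    then show "Q' = Q" by (rule sym)
  qed
  have mx: "\<forall>Q'. Q \<subseteq> Q' \<and> Q' \<subseteq> P \<and> polyomino Q' \<longrightarrow> Q' = Q"
  proof (intro allI impI)
    fix Q' assume h: "Q \<subseteq> Q' \<and> Q' \<subseteq> P \<and> polyomino Q'"
    show "Q' = Q" using maxi[OF conjunct1[OF h] conjunct1[OF conjunct2[OF h]] conjunct2[OF conjunct2[OF h]]] .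
  qed
  have "Q \<in> components P" unfolding components_def mem_Collect_eq using QP pQ mx by (intro conjI)
  then show ?thesis using aQ by blast
qed

lemma union_comps: "finite P \<Longrightarrow> \<Union>(components P) = P"
  using comp_exists comp_sub by blast

lemma main_ind:
  assumes fin: "finite P"
  shows "finite S \<Longrightarrow> S \<subseteq> components P \<Longrightarrow> switching_rook_poly (\<Union>S) = (\<Prod>Q\<in>S. switching_rook_poly Q)"
proof (induction S rule: finite_induct)
  case empty
  then show ?case using srp_empty by simp
next
  case (insert Q S)
  have QP: "Q \<in> components P" using insert.prems by blast
  have s: "sep Q (\<Union>S)"
    using comps_sep[OF QP] insert.prems insert.hyps(2) unfolding sep_def by blast
  have fQ: "finite Q" using comp_sub[OF QP] fin finite_subset by blast
  have "\<Union>S \<subseteq> P" using insert.prems comp_sub by blast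
  then have fS: "finite (\<Union>S)" using fin finite_subset by blast
  have "switching_rook_poly (\<Union>(insert Q S)) = switching_rook_poly (Q \<union> \<Union>S)" by simp
  also have "\<dots> = switching_rook_poly Q * switching_rook_poly (\<Union>S)" using srp_union[OF s fQ fS] .
  also have "\<dots> = (\<Prod>Q\<in>insert Q S. switching_rook_poly Q)"
    using insert.IH insert.prems insert.hyps by simp
  finally show ?case .
qed


theorem lemma1p1:
  assumes "collection P"
  shows "switching_rook_poly P = (\<Prod>Q\<in>components P. switching_rook_poly Q)"
proof -
  have fin: "finite P" using assms unfolding collection_def by blast
  have "components P \<subseteq> Pow P" using comp_sub by blast
  then have fc: "finite (components P)" using fin finite_subset by blast
  have "switching_rook_poly (\<Union>(components P)) = (\<Prod>Q\<in>components P. switching_rook_poly Q)"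
    using main_ind[OF fin fc] by blast
  then show ?thesis using union_comps[OF fin] by simp
qed

end
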